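(* For each $n=1,\dots,N$: (i) $h_n(y,t)=h_n(2m_n-y,t)$ for all $y,t$ (where defined); in particular $h_n(\overline m_n,\cdot)=h_n(\underline m_n,\cdot)$; (ii) $y\mapsto h_n(y,t)$ is strictly increasing for $y\le\underline m_n$ and strictly decreasing for $y\ge\overline m_n$. Here for $n=1$ (resp. $n=N$), $\underline m_n=\overline m_n=-\infty$ (resp. $+\infty$).
   Context: $N<\infty$. $Z$ under $\overline{\mathbb{P}}$ is the difference of two independent Poisson processes with intensity $\beta>0$ (on $\mathbb{Z}$). $(a_n)_{n=1}^{N+1}$ is strictly increasing in $\mathbb{Z}\cup\{\pm\infty\}$, $a_1=-\infty$, $a_{N+1}=\infty$, $\bigcup_n[a_n,a_{n+1})=\mathbb{Z}\cup\{-\infty\}$, with $m_n=(a_n+a_{n+1}-1)/2\notin\mathbb{Z}$; $\underline m_n=\lfloor m_n\rfloor$, $\overline m_n=\lceil m_n\rceil$. $h_n(y,t)=\overline{\mathbb{P}}(Z_1\in[a_n,a_{n+1})\mid Z_t=y)$ for $y\in\mathbb{Z}$, $t\in[0,1]$. *)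

theory Defs
  imports "HOL-Probability.Probability"
begin

text \<open>Law of Z_s (= law of Z_{u+s} - Z_u): difference of two independent Poisson
  random variables with mean beta*s each; Z_0 = 0.\<close>
definition skellam_pmf :: "real \<Rightarrow> real \<Rightarrow> int pmf" where
  "skellam_pmf \<beta> s =
     (if s = 0 then return_pmf 0
      else map_pmf (\<lambda>(i, j). int i - int j)
             (pair_pmf (poisson_pmf (\<beta> * s)) (poisson_pmf (\<beta> * s))))"

text \<open>Joint law of (Z_t, Z_1) under Pbar (independent stationary increments).\<close>
definition joint_Zt_Z1 :: "real \<Rightarrow> real \<Rightarrow> (int \<times> int) pmf" where
  "joint_Zt_Z1 \<beta> t =
     do { x \<leftarrow> skellam_pmf \<beta> t; d \<leftarrow> skellam_pmf \<beta> (1 - t); return_pmf (x, x + d) }"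

text \<open>h_n(y,t) = Pbar(Z_1 \<in> [a_n, a_{n+1}) | Z_t = y)  (meaningful when Pbar(Z_t = y) > 0).\<close>
definition hfun :: "real \<Rightarrow> (nat \<Rightarrow> ereal) \<Rightarrow> nat \<Rightarrow> int \<Rightarrow> real \<Rightarrow> real" where
  "hfun \<beta> a n y t =
     measure_pmf.prob (cond_pmf (joint_Zt_Z1 \<beta> t) {p. fst p = y})
       {p. a n \<le> ereal (real_of_int (snd p)) \<and> ereal (real_of_int (snd p)) < a (Suc n)}"

text \<open>m_n = (a_n + a_{n+1} - 1)/2 (only meaningful when both endpoints are finite).\<close>
definition mid :: "(nat \<Rightarrow> ereal) \<Rightarrow> nat \<Rightarrow> real" where
  "mid a n = (real_of_ereal (a n) + real_of_ereal (a (Suc n)) - 1) / 2"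

definition mlow :: "(nat \<Rightarrow> ereal) \<Rightarrow> nat \<Rightarrow> ereal" where
  "mlow a n = (if a n = -\<infinity> then -\<infinity> else if a (Suc n) = \<infinity> then \<infinity>
               else ereal (real_of_int \<lfloor>mid a n\<rfloor>))"

definition mhigh :: "(nat \<Rightarrow> ereal) \<Rightarrow> nat \<Rightarrow> ereal" where
  "mhigh a n = (if a n = -\<infinity> then -\<infinity> else if a (Suc n) = \<infinity> then \<infinity>
               else ereal (real_of_int \<lceil>mid a n\<rceil>))"

end

theory Submission imports Defs begin
no_notation Infinite_Sum.abs_summable_on (infixr \<open>abs'_summable'_on\<close> 46)

lemma skel_sums:
  fixes \<mu> :: real and k :: int
  assumes mu: "\<mu> > 0"
  shows "(\<lambda>j. pmf (poisson_pmf \<mu>) (j + nat \<bar>k\<bar>) * pmf (poisson_pmf \<mu>) j) sums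
     pmf (map_pmf (\<lambda>(i, j). int i - int j) (pair_pmf (poisson_pmf \<mu>) (poisson_pmf \<mu>))) k"
proof -
  let ?Q = "poisson_pmf \<mu>"
  let ?P = "pair_pmf ?Q ?Q"
  let ?f = "\<lambda>(i::nat, j::nat). int i - int j"
  have 1: "pmf (map_pmf ?f ?P) k = infsetsum (pmf ?P) (?f -` {k})"
    by (simp add: pmf_map measure_pmf_conv_infsetsum)
  show ?thesis
  proof (cases "k \<ge> 0")
    case True
    define g where "g = (\<lambda>j::nat. (j + nat k, j))"
    have inj: "inj g" by (auto simp: g_def inj_def)
    have img: "?f -` {k} = g ` UNIV"
    proof (rule set_eqI, rule iffI)
      fix p assume "p \<in> ?f -` {k}"
      then obtain a b where p: "p = (a,b)" "int a - int b = k" by (cases p) auto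
      hence "p = g b" using True by (auto simp: g_def)
      thus "p \<in> g ` UNIV" by auto
    next
      fix p assume "p \<in> g ` UNIV" thus "p \<in> ?f -` {k}" using True by (auto simp: g_def)
    qed
    have s: "(\<lambda>j. pmf ?P (g j)) abs_summable_on UNIV"
      using abs_summable_on_reindex_iff[OF inj, of "pmf ?P"] by auto
    have "(\<lambda>j. pmf ?P (g j)) sums infsetsum (\<lambda>j. pmf ?P (g j)) UNIV"
      by (rule sums_infsetsum_nat'[OF s])
    also have "infsetsum (\<lambda>j. pmf ?P (g j)) UNIV = pmf (map_pmf ?f ?P) k"
      unfolding 1 img by (rule infsetsum_reindex[OF inj, symmetric])
    finally show ?thesis using True by (simp add: g_def pmf_pair)
  next
    case False
    define g where "g = (\<lambda>j::nat. (j, j + nat (-k)))"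
    have inj: "inj g" by (auto simp: g_def inj_def)
    have img: "?f -` {k} = g ` UNIV"
    proof (rule set_eqI, rule iffI)
      fix p assume "p \<in> ?f -` {k}"
      then obtain a b where p: "p = (a,b)" "int a - int b = k" by (cases p) auto
      hence "p = g a" using False by (auto simp: g_def)
      thus "p \<in> g ` UNIV" by auto
    next
      fix p assume "p \<in> g ` UNIV" thus "p \<in> ?f -` {k}" using False by (auto simp: g_def)
    qed
    have s: "(\<lambda>j. pmf ?P (g j)) abs_summable_on UNIV"
      using abs_summable_on_reindex_iff[OF inj, of "pmf ?P"] by auto
    have "(\<lambda>j. pmf ?P (g j)) sums infsetsum (\<lambda>j. pmf ?P (g j)) UNIV"
      by (rule sums_infsetsum_nat'[OF s])
    also have "infsetsum (\<lambda>j. pmf ?P (g j)) UNIV = pmf (map_pmf ?f ?P) k"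
      unfolding 1 img by (rule infsetsum_reindex[OF inj, symmetric])
    finally have "(\<lambda>j. pmf ?P (g j)) sums pmf (map_pmf ?f ?P) k" .
    moreover have "(\<lambda>j. pmf ?P (g j)) = (\<lambda>j. pmf ?Q (j + nat \<bar>k\<bar>) * pmf ?Q j)"
    proof
      fix j
      have "nat \<bar>k\<bar> = nat (-k)" using False by simp
      thus "pmf ?P (g j) = pmf ?Q (j + nat \<bar>k\<bar>) * pmf ?Q j"
        unfolding g_def pmf_pair by (simp only: mult.commute)
    qed
    ultimately show ?thesis by simp
  qed
qed

lemma poisson_lc:
  fixes \<mu> :: real assumes mu: "\<mu> > 0"
  shows "pmf (poisson_pmf \<mu>) (j + Suc K) * pmf (poisson_pmf \<mu>) j
         \<le> pmf (poisson_pmf \<mu>) (j + K) * pmf (poisson_pmf \<mu>) (Suc j)"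
proof -
  have e: "\<And>n. pmf (poisson_pmf \<mu>) (Suc n) = pmf (poisson_pmf \<mu>) n * (\<mu> / (Suc n))"
    using mu by (simp add: fact_Suc mult_ac)
  have q: "pmf (poisson_pmf \<mu>) (j + K) * pmf (poisson_pmf \<mu>) j \<ge> 0" by simp
  have "\<mu> / real (Suc (j + K)) \<le> \<mu> / real (Suc j)"
    using mu by (intro divide_left_mono) auto
  from mult_left_mono[OF this q] show ?thesis
    unfolding add_Suc_right e by (simp only: mult_ac)
qed

lemma skel_dec:
  fixes \<mu> :: real assumes mu: "\<mu> > 0"
  defines "p \<equiv> pmf (map_pmf (\<lambda>(i, j). int i - int j) (pair_pmf (poisson_pmf \<mu>) (poisson_pmf \<mu>)))"
  shows "p (int (Suc K)) < p (int K)"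
proof -
  define q where "q = pmf (poisson_pmf \<mu>)"
  define A where "A = (\<lambda>j. q (j + K) * q j)"
  define x where "x = (\<lambda>j. q (j + Suc K) * q j)"
  have sA: "A sums p (int K)" using skel_sums[OF mu, of "int K"] by (simp add: A_def q_def p_def)
  have h: "nat \<bar>int (Suc K)\<bar> = Suc K" by simp
  have sx: "x sums p (int (Suc K))" using skel_sums[OF mu, of "int (Suc K)"] unfolding h by (simp only: x_def q_def p_def)
  have le: "x j \<le> (A j + A (Suc j)) / 2" for j
  proof -
    have x0: "x j \<ge> 0" "A j \<ge> 0" "A (Suc j) \<ge> 0" by (auto simp: x_def A_def q_def)
    have "x j ^ 2 = (q (j + Suc K) * q j) * (q (j + Suc K) * q j)" by (simp add: x_def power2_eq_square)
    also have "\<dots> \<le> (q (j + K) * q (Suc j)) * (q (j + Suc K) * q j)"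
      by (intro mult_right_mono) (use poisson_lc[OF mu, of j K] in \<open>auto simp: q_def\<close>)
    also have "\<dots> = A j * A (Suc j)" by (simp add: A_def mult_ac)
    also have "\<dots> \<le> ((A j + A (Suc j)) / 2) ^ 2"
    proof -
      have "((A j + A (Suc j)) / 2) ^ 2 = A j * A (Suc j) + (A j - A (Suc j))^2 / 4"
        by (simp add: power2_eq_square field_simps)
      moreover have "(A j - A (Suc j))^2 / 4 \<ge> 0" by simp
      ultimately show ?thesis by linarith
    qed
    finally have sq: "x j ^ 2 \<le> ((A j + A (Suc j)) / 2) ^ 2" .
    have "0 \<le> (A j + A (Suc j)) / 2" using x0 by simp
    with sq show ?thesis by (rule power2_le_imp_le)
  qed
  have sA': "(\<lambda>j. A (Suc j)) sums (p (int K) - A 0)"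
    using sA by (simp add: sums_Suc_iff)
  have sB: "(\<lambda>j. (A j + A (Suc j)) / 2) sums ((p (int K) + (p (int K) - A 0)) / 2)"
    by (intro sums_divide sums_add sA sA')
  have "p (int (Suc K)) \<le> (p (int K) + (p (int K) - A 0)) / 2"
    by (rule sums_le[OF le sx sB])
  moreover have "A 0 > 0" using mu by (simp add: A_def q_def)
  hence "(p (int K) + (p (int K) - A 0)) / 2 < p (int K)" by (simp add: field_simps)
  ultimately show ?thesis by (rule order_le_less_trans)
qed

lemma skel_pos:
  fixes \<mu> :: real assumes mu: "\<mu> > 0"
  shows "pmf (map_pmf (\<lambda>(i, j). int i - int j) (pair_pmf (poisson_pmf \<mu>) (poisson_pmf \<mu>))) k > 0"
proof -
  have "k \<in> set_pmf (map_pmf (\<lambda>(i, j). int i - int j) (pair_pmf (poisson_pmf \<mu>) (poisson_pmf \<mu>)))"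
  proof (cases "k \<ge> 0")
    case True
    hence "k = (\<lambda>(i, j). int i - int j) (nat k, 0)" by simp
    thus ?thesis using mu by (simp only: set_map_pmf set_pair_pmf set_pmf_poisson) blast
  next
    case False
    hence "k = (\<lambda>(i, j). int i - int j) (0, nat (-k))" by simp
    thus ?thesis using mu by (simp only: set_map_pmf set_pair_pmf set_pmf_poisson) blast
  qed
  hence "pmf (map_pmf (\<lambda>(i, j). int i - int j) (pair_pmf (poisson_pmf \<mu>) (poisson_pmf \<mu>))) k \<noteq> 0"
    unfolding set_pmf_iff .
  thus ?thesis using pmf_nonneg order_less_le by metis
qed

lemma skel_abs:
  fixes \<mu> :: real assumes mu: "\<mu> > 0"
  defines "p \<equiv> pmf (map_pmf (\<lambda>(i, j). int i - int j) (pair_pmf (poisson_pmf \<mu>) (poisson_pmf \<mu>)))"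
  shows "p k = p (int (nat \<bar>k\<bar>))"
proof -
  have h: "nat \<bar>int (nat \<bar>k\<bar>)\<bar> = nat \<bar>k\<bar>" by simp
  show ?thesis
    using skel_sums[OF mu, of k] skel_sums[OF mu, of "int (nat \<bar>k\<bar>)"] unfolding h p_def
    using sums_unique2 by blast
qed

lemma skel_strict:
  fixes \<mu> :: real assumes mu: "\<mu> > 0"
  defines "p \<equiv> pmf (map_pmf (\<lambda>(i, j). int i - int j) (pair_pmf (poisson_pmf \<mu>) (poisson_pmf \<mu>)))"
  assumes lt: "\<bar>k\<bar> < \<bar>k'\<bar>"
  shows "p k' < p k"
proof -
  have m: "(\<lambda>K. - p (int K)) K < (\<lambda>K. - p (int K)) (Suc K)" for K
    using skel_dec[OF mu, of K] by (simp add: p_def)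
  have "nat \<bar>k\<bar> < nat \<bar>k'\<bar>" using lt by simp
  from lift_Suc_mono_less[of "\<lambda>K. - p (int K)", OF m this]
  have "p (int (nat \<bar>k'\<bar>)) < p (int (nat \<bar>k\<bar>))" by simp
  thus ?thesis using skel_abs[OF mu, of k] skel_abs[OF mu, of k'] by (simp add: p_def)
qed

lemma skel_sym: "map_pmf uminus (skellam_pmf \<beta> s) = skellam_pmf \<beta> s"
proof (cases "s = 0")
  case True thus ?thesis by (simp add: skellam_pmf_def)
next
  case False
  let ?PQ = "pair_pmf (poisson_pmf (\<beta> * s)) (poisson_pmf (\<beta> * s))"
  let ?f = "\<lambda>(i::nat, j::nat). int i - int j"
  have "map_pmf uminus (map_pmf ?f ?PQ) = map_pmf (?f \<circ> (\<lambda>(x, y). (y, x))) ?PQ"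
    by (simp add: pmf.map_comp comp_def case_prod_beta)
  also have "\<dots> = map_pmf ?f (map_pmf (\<lambda>(x, y). (y, x)) ?PQ)" by (simp add: pmf.map_comp)
  also have "map_pmf (\<lambda>(x, y). (y, x)) ?PQ = ?PQ" by (rule pair_commute_pmf[symmetric])
  finally show ?thesis using False by (simp add: skellam_pmf_def)
qed

lemma skel_sym_measure:
  "measure_pmf.prob (skellam_pmf \<beta> s) X = measure_pmf.prob (skellam_pmf \<beta> s) (uminus -` X)"
proof -
  have "measure_pmf.prob (skellam_pmf \<beta> s) X = measure_pmf.prob (map_pmf uminus (skellam_pmf \<beta> s)) X"
    by (simp only: skel_sym)
  also have "\<dots> = measure_pmf.prob (skellam_pmf \<beta> s) (uminus -` X)" by (rule measure_map_pmf)
  finally show ?thesis .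
qed

lemma joint_map:
  "joint_Zt_Z1 \<beta> t = map_pmf (\<lambda>(x, d). (x, x + d)) (pair_pmf (skellam_pmf \<beta> t) (skellam_pmf \<beta> (1 - t)))"
  by (simp add: joint_Zt_Z1_def pair_pmf_def map_bind_pmf)

lemma skel_set:
  assumes "\<beta> > 0" "t > 0" shows "set_pmf (skellam_pmf \<beta> t) = UNIV"
proof -
  have "pmf (skellam_pmf \<beta> t) k > 0" for k
    using skel_pos[of "\<beta> * t" k] assms by (simp add: skellam_pmf_def)
  hence "k \<in> set_pmf (skellam_pmf \<beta> t)" for k by (metis set_pmf_iff less_irrefl)
  thus ?thesis by auto
qed

lemma hfun_eq:
  assumes b: "\<beta> > 0" and t: "t > 0"
  shows "hfun \<beta> a n y t = measure_pmf.prob (skellam_pmf \<beta> (1 - t))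
           {d. a n \<le> ereal (real_of_int (y + d)) \<and> ereal (real_of_int (y + d)) < a (Suc n)}"
proof -
  let ?Pt = "skellam_pmf \<beta> t" and ?Pd = "skellam_pmf \<beta> (1 - t)"
  let ?PQ = "pair_pmf ?Pt ?Pd"
  let ?F = "\<lambda>(x::int, d::int). (x, x + d)"
  let ?E = "{p::int\<times>int. a n \<le> ereal (real_of_int (snd p)) \<and> ereal (real_of_int (snd p)) < a (Suc n)}"
  have pre: "?F -` {p. fst p = y} = {y} \<times> UNIV" by auto
  have yin: "y \<in> set_pmf ?Pt" using skel_set[OF b t] by simp
  have ne: "set_pmf ?PQ \<inter> ?F -` {p. fst p = y} \<noteq> {}"
    unfolding pre using yin set_pmf_not_empty[of ?Pd] by (auto simp: set_pair_pmf)
  have ne2: "set_pmf ?PQ \<inter> ({y} \<times> UNIV) \<noteq> {}" using ne unfolding pre .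
  have mprod: "measure_pmf.prob ?PQ ({y} \<times> UNIV) = pmf ?Pt y"
    by (subst measure_pmf_prob_product) (auto simp: measure_pmf_single)
  have ypos: "pmf ?Pt y \<noteq> 0" using yin by (simp add: set_pmf_iff)
  have c: "cond_pmf ?PQ ({y} \<times> UNIV) = pair_pmf (return_pmf y) ?Pd"
  proof (rule pmf_eqI)
    fix z :: "int \<times> int"
    obtain x d where z: "z = (x, d)" by (cases z)
    show "pmf (cond_pmf ?PQ ({y} \<times> UNIV)) z = pmf (pair_pmf (return_pmf y) ?Pd) z"
      unfolding pmf_cond[OF ne2] mprod z using ypos by (auto simp: pmf_pair)
  qed
  have "hfun \<beta> a n y t = measure_pmf.prob (cond_pmf (map_pmf ?F ?PQ) {p. fst p = y}) ?E"
    by (simp add: hfun_def joint_map)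
  also have "\<dots> = measure_pmf.prob (map_pmf ?F (pair_pmf (return_pmf y) ?Pd)) ?E"
    unfolding cond_map_pmf[OF ne] pre c ..
  also have "\<dots> = measure_pmf.prob (map_pmf (\<lambda>d. (y, y + d)) ?Pd) ?E"
    by (simp add: pair_return_pmf1 pmf.map_comp comp_def)
  also have "\<dots> = measure_pmf.prob ?Pd
           {d. a n \<le> ereal (real_of_int (y + d)) \<and> ereal (real_of_int (y + d)) < a (Suc n)}"
    by (simp add: vimage_def)
  finally show ?thesis .
qed

lemma mono_down:
  fixes f :: "int \<Rightarrow> real"
  assumes "\<And>y. ereal (real_of_int (y + 1)) \<le> M \<Longrightarrow> f y < f (y + 1)"
  shows "strict_mono_on {y. ereal (real_of_int y) \<le> M} f"
proof (rule monotone_onI)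
  fix x y assume x: "x \<in> {y. ereal (real_of_int y) \<le> M}" and y: "y \<in> {y. ereal (real_of_int y) \<le> M}" and xy: "x < y"
  have "x + 1 \<le> y" using xy by simp
  hence "ereal (real_of_int y) \<le> M \<longrightarrow> f x < f y"
  proof (induction y rule: int_ge_induct)
    case base thus ?case using assms[of x] by simp
  next
    case (step z)
    show ?case
    proof
      assume z1: "ereal (real_of_int (z + 1)) \<le> M"
      have "ereal (real_of_int z) \<le> ereal (real_of_int (z + 1))" by simp
      hence "ereal (real_of_int z) \<le> M" using z1 by (rule order_trans)
      with step.IH have "f x < f z" by simp
      also have "f z < f (z + 1)" using assms[OF z1] .
      finally show "f x < f (z + 1)" .
    qed
  qed
  thus "f x < f y" using y by simp
qed

lemma anti_up:
  fixes f :: "int \<Rightarrow> real"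
  assumes "\<And>y. M \<le> ereal (real_of_int y) \<Longrightarrow> f (y + 1) < f y"
  shows "strict_antimono_on {y. M \<le> ereal (real_of_int y)} f"
proof (rule monotone_onI)
  fix x y assume x: "x \<in> {y. M \<le> ereal (real_of_int y)}" and xy: "x < y"
  have "x + 1 \<le> y" using xy by simp
  hence "f y < f x"
  proof (induction y rule: int_ge_induct)
    case base thus ?case using assms[of x] x by simp
  next
    case (step z)
    have "M \<le> ereal (real_of_int z)" using x step.hyps by (auto intro: order_trans)
    hence "f (z + 1) < f z" by (rule assms)
    also have "f z < f x" by (rule step.IH)
    finally show ?case .
  qed
  thus "f y < f x" .
qed

lemma measure_insert_pmf:
  assumes "x \<notin> S"
  shows "measure_pmf.prob M (insert x S) = pmf M x + measure_pmf.prob M S"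
proof -
  have "measure_pmf.prob M ({x} \<union> S) = measure_pmf.prob M {x} + measure_pmf.prob M S"
    using assms by (intro measure_pmf.finite_measure_Union) auto
  thus ?thesis by (simp add: measure_pmf_single)
qed

lemma floor_ceil_sum:
  fixes c :: int assumes "real_of_int c / 2 \<notin> \<int>"
  shows "real_of_int \<lceil>real_of_int c / 2\<rceil> + real_of_int \<lfloor>real_of_int c / 2\<rfloor> = real_of_int c"
proof -
  have "odd c"
  proof (rule ccontr)
    assume "\<not> odd c" then obtain q where "c = 2 * q" by (auto elim: evenE)
    hence "real_of_int c / 2 = real_of_int q" by simp
    thus False using assms by auto
  qed
  then obtain q where q: "c = 2 * q + 1" by (auto elim: oddE)
  have e: "real_of_int c / 2 = real_of_int q + 1/2" using q by simp
  have f: "\<lfloor>real_of_int c / 2\<rfloor> = q" unfolding e by (intro floor_unique) auto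
  have g: "\<lceil>real_of_int c / 2\<rceil> = q + 1" unfolding e by (intro ceiling_unique) auto
  have "real_of_int (q + 1) + real_of_int q = real_of_int c" using q by simp
  thus ?thesis unfolding f g .
qed


lemma ei_le: "ereal (real_of_int u) \<le> ereal (real_of_int v) \<longleftrightarrow> u \<le> v" by simp
lemma ei_less: "ereal (real_of_int u) < ereal (real_of_int v) \<longleftrightarrow> u < v" by simp

theorem lemma5p2:
  fixes \<beta> :: real and N :: nat and a :: "nat \<Rightarrow> ereal" and n :: nat
  assumes beta_pos: "\<beta> > 0"
    and N_ge: "2 \<le> N"
    and a_first: "a 1 = -\<infinity>"
    and a_last: "a (Suc N) = \<infinity>"
    and a_strict: "\<forall>k \<in> {1..N}. a k < a (Suc k)"
    and a_int: "\<forall>k \<in> {2..N}. \<exists>z::int. a k = ereal (real_of_int z)"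
    and m_nonint: "\<forall>k \<in> {2..N-1}. mid a k \<notin> \<int>"
    and n_range: "n \<in> {1..N}"
  shows "(1 < n \<and> n < N \<longrightarrow>
            (\<forall>t \<in> {0<..1}. (\<forall>y y'. real_of_int y + real_of_int y' = 2 * mid a n
                                 \<longrightarrow> hfun \<beta> a n y t = hfun \<beta> a n y' t)
                          \<and> hfun \<beta> a n \<lceil>mid a n\<rceil> t = hfun \<beta> a n \<lfloor>mid a n\<rfloor> t))
       \<and> (\<forall>t \<in> {0<..<1}.
            strict_mono_on {y::int. ereal (real_of_int y) \<le> mlow a n} (\<lambda>y. hfun \<beta> a n y t)
          \<and> strict_antimono_on {y::int. mhigh a n \<le> ereal (real_of_int y)} (\<lambda>y. hfun \<beta> a n y t))"
proof (intro conjI impI ballI)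
  define E where "E = (\<lambda>y. {d::int. a n \<le> ereal (real_of_int (y + d)) \<and> ereal (real_of_int (y + d)) < a (Suc n)})"
  have hf: "hfun \<beta> a n y t = measure_pmf.prob (skellam_pmf \<beta> (1 - t)) (E y)" if "t > 0" for y t
    unfolding E_def by (rule hfun_eq[OF beta_pos that])
  {
    assume mid_n: "1 < n \<and> n < N"
    have "n \<in> {2..N}" "Suc n \<in> {2..N}" using mid_n by auto
    then obtain A B where A: "a n = ereal (real_of_int A)" and B: "a (Suc n) = ereal (real_of_int B)"
      using a_int by meson
    have midAB: "mid a n = real_of_int (A + B - 1) / 2" by (simp add: mid_def A B)
    have symm: "hfun \<beta> a n y t = hfun \<beta> a n y' t" if t: "t \<in> {0<..1}" and yy: "real_of_int y + real_of_int y' = 2 * mid a n" for t y y'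
    proof -
      have "real_of_int (y + y') = real_of_int (A + B - 1)" using yy unfolding midAB by simp
      hence "y + y' = A + B - 1" by (simp only: of_int_eq_iff)
      hence y': "y' = A + B - 1 - y" by simp
      have "uminus -` E y' = E y" unfolding E_def A B y' ei_le ei_less by auto
      thus ?thesis using t hf skel_sym_measure by (metis greaterThanAtMost_iff)
    qed
    fix t :: real assume t: "t \<in> {0<..1}"
    show "\<forall>y y'. real_of_int y + real_of_int y' = 2 * mid a n \<longrightarrow> hfun \<beta> a n y t = hfun \<beta> a n y' t"
      using symm[OF t] by blast
    have "mid a n \<notin> \<int>" using m_nonint mid_n by auto
    hence "real_of_int \<lceil>mid a n\<rceil> + real_of_int \<lfloor>mid a n\<rfloor> = 2 * mid a n"
      using floor_ceil_sum[of "A + B - 1"] unfolding midAB by simp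
    thus "hfun \<beta> a n \<lceil>mid a n\<rceil> t = hfun \<beta> a n \<lfloor>mid a n\<rfloor> t" by (rule symm[OF t])
  }
  fix t :: real assume t: "t \<in> {0<..<1}"
  define \<mu> where "\<mu> = \<beta> * (1 - t)"
  have mu: "\<mu> > 0" using t beta_pos by (simp add: \<mu>_def)
  define P where "P = skellam_pmf \<beta> (1 - t)"
  have Peq: "P = map_pmf (\<lambda>(i, j). int i - int j) (pair_pmf (poisson_pmf \<mu>) (poisson_pmf \<mu>))"
    using t by (simp add: P_def skellam_pmf_def \<mu>_def)
  have ppos: "pmf P k > 0" for k unfolding Peq by (rule skel_pos[OF mu])
  have pstr: "pmf P k' < pmf P k" if "\<bar>k\<bar> < \<bar>k'\<bar>" for k k' unfolding Peq by (rule skel_strict[OF mu that])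
  define G where "G = (\<lambda>y. measure_pmf.prob P (E y))"
  have hG: "(\<lambda>y. hfun \<beta> a n y t) = G" using t hf by (auto simp: G_def P_def)
  have G_ins: "G z = pmf P x + G w" if "E z = insert x (E w)" "x \<notin> E w" for z w x
    unfolding G_def that(1) by (rule measure_insert_pmf[OF that(2)])
  consider (first) "n = 1" | (last) "n = N" | (middle) "1 < n" "n < N" using n_range N_ge by force
  hence "strict_mono_on {y::int. ereal (real_of_int y) \<le> mlow a n} G
       \<and> strict_antimono_on {y::int. mhigh a n \<le> ereal (real_of_int y)} G"
  proof cases
    case first
    have "2 \<in> {2..N}" using N_ge by auto
    then obtain B where B: "a 2 = ereal (real_of_int B)" using a_int by meson
    have Ey: "E y = insert (B - 1 - y) (E (y + 1))" "B - 1 - y \<notin> E (y + 1)" for y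
      unfolding E_def first a_first using B by (auto simp: numeral_2_eq_2)
    have ml: "mlow a n = -\<infinity>" "mhigh a n = -\<infinity>" using a_first by (simp_all add: mlow_def mhigh_def first)
    show ?thesis unfolding ml
    proof
      show "strict_mono_on {y. ereal (real_of_int y) \<le> - \<infinity>} G" by (rule mono_down) simp
      show "strict_antimono_on {y. - \<infinity> \<le> ereal (real_of_int y)} G"
      proof (rule anti_up)
        fix y :: int
        have "G y = pmf P (B - 1 - y) + G (y + 1)" by (rule G_ins[OF Ey])
        thus "G (y + 1) < G y" using ppos[of "B - 1 - y"] by simp
      qed
    qed
  next
    case last
    have "N \<in> {2..N}" using N_ge by auto
    then obtain A where A: "a N = ereal (real_of_int A)" using a_int by meson
    have Ey: "E (y + 1) = insert (A - y - 1) (E y)" "A - y - 1 \<notin> E y" for y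
      unfolding E_def last a_last using A by auto
    have ml: "mlow a n = \<infinity>" "mhigh a n = \<infinity>" by (simp_all add: mlow_def mhigh_def last a_last A)
    show ?thesis unfolding ml
    proof
      show "strict_mono_on {y. ereal (real_of_int y) \<le> \<infinity>} G"
      proof (rule mono_down)
        fix y :: int
        have "G (y + 1) = pmf P (A - y - 1) + G y" by (rule G_ins[OF Ey])
        thus "G y < G (y + 1)" using ppos[of "A - y - 1"] by simp
      qed
      show "strict_antimono_on {y. \<infinity> \<le> ereal (real_of_int y)} G" by (rule anti_up) simp
    qed
  next
    case middle
    have "n \<in> {2..N}" "Suc n \<in> {2..N}" using middle by auto
    then obtain A B where A: "a n = ereal (real_of_int A)" and B: "a (Suc n) = ereal (real_of_int B)"
      using a_int by meson
    have "a n < a (Suc n)" using a_strict n_range by auto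
    hence AB: "A < B" unfolding A B by simp
    have midAB: "mid a n = real_of_int (A + B - 1) / 2" by (simp add: mid_def A B)
    have ml: "mlow a n = ereal (real_of_int \<lfloor>mid a n\<rfloor>)" "mhigh a n = ereal (real_of_int \<lceil>mid a n\<rceil>)"
      by (simp_all add: mlow_def mhigh_def A B)
    define C where "C = (\<lambda>y::int. {d::int. A - y \<le> d \<and> d \<le> B - 2 - y})"
    have E1: "E (y + 1) = insert (A - y - 1) (C y)" "A - y - 1 \<notin> C y" for y
      unfolding E_def C_def A B ei_le ei_less using AB by auto
    have E0: "E y = insert (B - 1 - y) (C y)" "B - 1 - y \<notin> C y" for y
      unfolding E_def C_def A B ei_le ei_less using AB by auto
    have GC1: "G (y + 1) = pmf P (A - y - 1) + measure_pmf.prob P (C y)" for y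
      unfolding G_def E1(1) by (rule measure_insert_pmf[OF E1(2)])
    have GC0: "G y = pmf P (B - 1 - y) + measure_pmf.prob P (C y)" for y
      unfolding G_def E0(1) by (rule measure_insert_pmf[OF E0(2)])
    note GC = GC1 GC0
    show ?thesis unfolding ml
    proof
      show "strict_mono_on {y. ereal (real_of_int y) \<le> ereal (real_of_int \<lfloor>mid a n\<rfloor>)} G"
      proof (rule mono_down)
        fix y :: int assume "ereal (real_of_int (y + 1)) \<le> ereal (real_of_int \<lfloor>mid a n\<rfloor>)"
        hence "y + 1 \<le> \<lfloor>mid a n\<rfloor>" by (simp only: ei_le)
        hence "real_of_int (y + 1) \<le> mid a n" by linarith
        hence "real_of_int (2 * (y + 1)) \<le> real_of_int (A + B - 1)" unfolding midAB by simp
        hence "2 * (y + 1) \<le> A + B - 1" by (simp only: of_int_le_iff)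
        hence "\<bar>A - y - 1\<bar> < \<bar>B - 1 - y\<bar>" using AB by (auto simp: abs_if)
        hence "pmf P (B - 1 - y) < pmf P (A - y - 1)" by (rule pstr)
        thus "G y < G (y + 1)" using GC1[of y] GC0[of y] by linarith
      qed
      show "strict_antimono_on {y. ereal (real_of_int \<lceil>mid a n\<rceil>) \<le> ereal (real_of_int y)} G"
      proof (rule anti_up)
        fix y :: int assume "ereal (real_of_int \<lceil>mid a n\<rceil>) \<le> ereal (real_of_int y)"
        hence "\<lceil>mid a n\<rceil> \<le> y" by (simp only: ei_le)
        hence "mid a n \<le> real_of_int y" by linarith
        hence "real_of_int (A + B - 1) \<le> real_of_int (2 * y)" unfolding midAB by simp
        hence "A + B - 1 \<le> 2 * y" by (simp only: of_int_le_iff)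
        hence "\<bar>B - 1 - y\<bar> < \<bar>A - y - 1\<bar>" using AB by (auto simp: abs_if)
        hence "pmf P (A - y - 1) < pmf P (B - 1 - y)" by (rule pstr)
        thus "G (y + 1) < G y" using GC1[of y] GC0[of y] by linarith
      qed
    qed
  qed
  thus "strict_mono_on {y::int. ereal (real_of_int y) \<le> mlow a n} (\<lambda>y. hfun \<beta> a n y t)"
    "strict_antimono_on {y::int. mhigh a n \<le> ereal (real_of_int y)} (\<lambda>y. hfun \<beta> a n y t)"
    unfolding hG by auto
qed

end
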